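(* (a) Let $E=\bigcup_n E_n$ and $F=\bigcup_n F_n$ be locally convex direct limits of ascending sequences of Banach spaces $(E_n)$ and $(F_n)$ (with injective continuous linear bonding maps), and assume both sequences are compactly regular. Then $E\times F$ (with the product topology) is the locally convex direct limit $\bigcup_n(E_n\times F_n)$, and the sequence $(E_n\times F_n)_n$ is compactly regular. (b) Let $(E_n)_n$ and $(F_n)_n$ be ascending sequences of locally convex spaces with injective continuous linear bonding maps, with locally convex direct limits $E=\bigcup_n E_n$ and $F=\bigcup_n F_n$, and let $\tau_n\colon E_n\to F_n$ be topological embeddings (continuous linear) compatible with the bonding maps, inducing $\tau\colon E\to F$. Assume that for all $m,n\in\mathbb{N}$, every $x\in E_m$ with $\tau(x)\in F_n$ lies in $E_n$, and that $(F_n)_n$ is compactly regular. Then $(E_n)_n$ is compactly regular.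
   Context: An ascending sequence $(E_n)$ of locally convex spaces with injective continuous linear bonding maps and direct limit $E=\bigcup_n E_n$ is compactly regular if for every compact subset $C$ of $E$ there is $n\in\mathbb{N}$ such that $C\subseteq E_n$ and $C$ is compact in $E_n$. *)

theory Defs
  imports "HOL-Analysis.Analysis"
begin

text \<open>A (real) topological vector space is modelled as a linear subspace of an ambient
real vector space (its carrier is the topspace of the topology) such that addition and
scalar multiplication are continuous.\<close>

definition tvs_on :: "'a::real_vector topology \<Rightarrow> bool" where
  "tvs_on T \<longleftrightarrow> subspace (topspace T)
     \<and> continuous_map (prod_topology T T) T (\<lambda>(x, y). x + y)
     \<and> continuous_map (prod_topology euclideanreal T) T (\<lambda>(c, x). c *\<^sub>R x)"

definition lc_topology :: "'a::real_vector topology \<Rightarrow> bool" where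
  "lc_topology T \<longleftrightarrow> tvs_on T \<and>
     (\<forall>U x. openin T U \<and> x \<in> U \<longrightarrow> (\<exists>V. openin T V \<and> convex V \<and> x \<in> V \<and> V \<subseteq> U))"

definition lc_space :: "'a::real_vector topology \<Rightarrow> bool" where
  "lc_space T \<longleftrightarrow> lc_topology T \<and> Hausdorff_space T"

definition linear_on :: "'a::real_vector set \<Rightarrow> ('a \<Rightarrow> 'b::real_vector) \<Rightarrow> bool" where
  "linear_on S f \<longleftrightarrow> (\<forall>x\<in>S. \<forall>y\<in>S. f (x + y) = f x + f y) \<and> (\<forall>c. \<forall>x\<in>S. f (c *\<^sub>R x) = c *\<^sub>R f x)"

definition banach_on :: "'a::real_vector topology \<Rightarrow> bool" where
  "banach_on T \<longleftrightarrow> subspace (topspace T) \<and>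
     (\<exists>N :: 'a \<Rightarrow> real.
        (\<forall>x\<in>topspace T. N x \<ge> 0 \<and> (N x = 0 \<longleftrightarrow> x = 0))
      \<and> (\<forall>x\<in>topspace T. \<forall>y\<in>topspace T. N (x + y) \<le> N x + N y)
      \<and> (\<forall>c. \<forall>x\<in>topspace T. N (c *\<^sub>R x) = \<bar>c\<bar> * N x)
      \<and> Metric_space (topspace T) (\<lambda>x y. N (x - y))
      \<and> T = Metric_space.mtopology (topspace T) (\<lambda>x y. N (x - y))
      \<and> Metric_space.mcomplete (topspace T) (\<lambda>x y. N (x - y)))"

text \<open>Ascending sequence of spaces E_n = topspace (T n) inside a common vector space,
the bonding maps being the (injective, linear) inclusions, required to be continuous.\<close>
definition ascending_seq :: "(nat \<Rightarrow> 'a::real_vector topology) \<Rightarrow> bool" where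
  "ascending_seq T \<longleftrightarrow> (\<forall>n. topspace (T n) \<subseteq> topspace (T (Suc n))
      \<and> continuous_map (T n) (T (Suc n)) id)"

definition lc_direct_limit :: "(nat \<Rightarrow> 'a::real_vector topology) \<Rightarrow> 'a topology \<Rightarrow> bool" where
  "lc_direct_limit T L \<longleftrightarrow>
     lc_topology L \<and> topspace L = (\<Union>n. topspace (T n)) \<and> (\<forall>n. continuous_map (T n) L id)
     \<and> (\<forall>L'. lc_topology L' \<and> topspace L' = (\<Union>n. topspace (T n)) \<and> (\<forall>n. continuous_map (T n) L' id)
            \<longrightarrow> (\<forall>U. openin L' U \<longrightarrow> openin L U))"

definition compactly_regular :: "(nat \<Rightarrow> 'a topology) \<Rightarrow> 'a topology \<Rightarrow> bool" where
  "compactly_regular T L \<longleftrightarrow>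
     (\<forall>C. compactin L C \<longrightarrow> (\<exists>n. C \<subseteq> topspace (T n) \<and> compactin (T n) C))"

end

theory Submission
  imports Defs
begin


lemma tvs_add:
  assumes "tvs_on L" "continuous_map X L f" "continuous_map X L g"
  shows "continuous_map X L (\<lambda>z. f z + g z)"
proof -
  have "continuous_map X L ((\<lambda>(x, y). x + y) \<circ> (\<lambda>z. (f z, g z)))"
    using assms by (intro continuous_map_compose[OF continuous_map_pairedI]) (auto simp: tvs_on_def)
  then show ?thesis by (simp add: o_def)
qed

lemma tvs_scale:
  assumes "tvs_on L" "continuous_map X euclideanreal h" "continuous_map X L f"
  shows "continuous_map X L (\<lambda>z. h z *\<^sub>R f z)"
proof -
  have "continuous_map X L ((\<lambda>(c, x). c *\<^sub>R x) \<circ> (\<lambda>z. (h z, f z)))"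
    using assms by (intro continuous_map_compose[OF continuous_map_pairedI]) (auto simp: tvs_on_def)
  then show ?thesis by (simp add: o_def)
qed

lemma tvs_const:
  assumes "c \<in> topspace L"
  shows "continuous_map X L (\<lambda>z. c)"
  using assms by simp

lemma asc_mono:
  assumes "ascending_seq T" "m \<le> n"
  shows "topspace (T m) \<subseteq> topspace (T n) \<and> continuous_map (T m) (T n) id"
  using assms(2)
proof (induction n rule: dec_induct)
  case base then show ?case by simp
next
  case (step k)
  have "continuous_map (T m) (T (Suc k)) (id \<circ> id)"
    using step assms(1) unfolding ascending_seq_def by (metis continuous_map_compose)
  then have "continuous_map (T m) (T (Suc k)) id" by simp
  moreover have "topspace (T m) \<subseteq> topspace (T (Suc k))"
    using step assms(1) unfolding ascending_seq_def by blast
  ultimately show ?case by blast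
qed

lemma lc_pullback:
  assumes L: "lc_topology L" and S: "subspace S" and g: "linear_on S g" and gS: "g ` S \<subseteq> topspace L"
  shows "lc_topology (pullback_topology S g L)" "topspace (pullback_topology S g L) = S"
proof -
  let ?P = "pullback_topology S g L"
  have tL: "tvs_on L" using L by (simp add: lc_topology_def)
  show tp: "topspace ?P = S" using gS by (auto simp: topspace_pullback_topology)
  have cg: "continuous_map ?P L g"
    using continuous_map_pullback[OF continuous_map_id, of S g L] by simp
  have add: "continuous_map (prod_topology ?P ?P) ?P (\<lambda>(x, y). x + y)"
  proof (rule continuous_map_pullback')
    have "continuous_map (prod_topology ?P ?P) L (\<lambda>p. g (fst p) + g (snd p))"
      using tL cg by (intro tvs_add) (auto intro: continuous_map_compose[unfolded o_def, OF continuous_map_fst]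
            continuous_map_compose[unfolded o_def, OF continuous_map_snd])
    then show "continuous_map (prod_topology ?P ?P) L (g \<circ> (\<lambda>(x, y). x + y))"
      by (rule continuous_map_eq) (use g tp in \<open>auto simp: linear_on_def\<close>)
    show "topspace (prod_topology ?P ?P) \<subseteq> (\<lambda>(x, y). x + y) -` S"
      using tp S by (auto simp: subspace_def)
  qed
  have sc: "continuous_map (prod_topology euclideanreal ?P) ?P (\<lambda>(c, x). c *\<^sub>R x)"
  proof (rule continuous_map_pullback')
    have "continuous_map (prod_topology euclideanreal ?P) L (\<lambda>p. fst p *\<^sub>R g (snd p))"
      using tL cg by (intro tvs_scale) (auto intro: continuous_map_fst continuous_map_compose[unfolded o_def, OF continuous_map_snd])
    then show "continuous_map (prod_topology euclideanreal ?P) L (g \<circ> (\<lambda>(c, x). c *\<^sub>R x))"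
      by (rule continuous_map_eq) (use g tp in \<open>auto simp: linear_on_def\<close>)
    show "topspace (prod_topology euclideanreal ?P) \<subseteq> (\<lambda>(c, x). c *\<^sub>R x) -` S"
      using tp S by (auto simp: subspace_def)
  qed
  have lcx: "\<exists>V. openin ?P V \<and> convex V \<and> x \<in> V \<and> V \<subseteq> U" if UU: "openin ?P U" "x \<in> U" for U x
  proof -
    obtain V where V: "openin L V" "U = g -` V \<inter> S" using UU by (auto simp: openin_pullback_topology)
    then obtain W where W: "openin L W" "convex W" "g x \<in> W" "W \<subseteq> V"
      using L UU V unfolding lc_topology_def by blast
    have "openin ?P (g -` W \<inter> S)" using W by (auto simp: openin_pullback_topology)
    moreover have "convex (g -` W \<inter> S)"
      unfolding convex_def
    proof (intro ballI allI impI)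
      fix a b and u v :: real assume ab: "a \<in> g -` W \<inter> S" "b \<in> g -` W \<inter> S" "0 \<le> u" "0 \<le> v" "u + v = 1"
      have "u *\<^sub>R a \<in> S" "v *\<^sub>R b \<in> S" using ab S by (auto simp: subspace_def)
      then have "g (u *\<^sub>R a + v *\<^sub>R b) = u *\<^sub>R g a + v *\<^sub>R g b"
        using g ab by (auto simp: linear_on_def)
      moreover have "u *\<^sub>R g a + v *\<^sub>R g b \<in> W" using W(2) ab unfolding convex_def by auto
      moreover have "u *\<^sub>R a + v *\<^sub>R b \<in> S" using \<open>u *\<^sub>R a \<in> S\<close> \<open>v *\<^sub>R b \<in> S\<close> S by (auto simp: subspace_def)
      ultimately show "u *\<^sub>R a + v *\<^sub>R b \<in> g -` W \<inter> S" by simp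
    qed
    moreover have "x \<in> g -` W \<inter> S" "g -` W \<inter> S \<subseteq> U" using W V UU by auto
    ultimately show ?thesis by blast
  qed
  show "lc_topology ?P" unfolding lc_topology_def tvs_on_def using tp S add sc lcx by auto
qed



lemma banach_unbounded:
  assumes B: "banach_on T" and v: "v \<noteq> 0" and S: "range (\<lambda>k::nat. real k *\<^sub>R v) \<subseteq> topspace T"
  shows "\<not> compactin T (range (\<lambda>k::nat. real k *\<^sub>R v))"
proof
  let ?S = "range (\<lambda>k::nat. real k *\<^sub>R v)"
  assume c: "compactin T ?S"
  obtain N :: "_ \<Rightarrow> real" where
    N0: "\<forall>x\<in>topspace T. N x \<ge> 0 \<and> (N x = 0 \<longleftrightarrow> x = 0)"
    and Ntri: "\<forall>x\<in>topspace T. \<forall>y\<in>topspace T. N (x + y) \<le> N x + N y"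
    and Nh: "\<forall>c. \<forall>x\<in>topspace T. N (c *\<^sub>R x) = \<bar>c\<bar> * N x"
    and ms: "Metric_space (topspace T) (\<lambda>x y. N (x - y))"
    and Tm: "T = Metric_space.mtopology (topspace T) (\<lambda>x y. N (x - y))"
    using B unfolding banach_on_def by (elim conjE exE) (rule that; assumption)
  have sub: "subspace (topspace T)" using B by (simp add: banach_on_def)
  have "compactin (Metric_space.mtopology (topspace T) (\<lambda>x y. N (x - y))) ?S"
    using c Tm by simp
  then have "Metric_space.mbounded (topspace T) (\<lambda>x y. N (x - y)) ?S"
    by (rule Metric_space.compactin_imp_mbounded[OF ms])
  then obtain y b where y: "y \<in> topspace T" and yb: "\<forall>x\<in>?S. N (y - x) \<le> b"
    using Metric_space.mbounded[OF ms] by auto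
  have "real (1::nat) *\<^sub>R v \<in> topspace T" using S by blast
  then have v1: "v \<in> topspace T" by simp
  have "N v \<ge> 0" "N v \<noteq> 0" using N0 v1 v by auto
  then have Nv: "N v > 0" by simp
  have bound: "real k * N v \<le> b + N y" for k :: nat
  proof -
    have kv: "real k *\<^sub>R v \<in> topspace T" using S by auto
    have d: "y - real k *\<^sub>R v \<in> topspace T" using kv y sub by (simp add: subspace_diff)
    have w: "real k *\<^sub>R v - y \<in> topspace T" using kv y sub by (simp add: subspace_diff)
    have t: "N ((real k *\<^sub>R v - y) + y) \<le> N (real k *\<^sub>R v - y) + N y" using Ntri w y by blast
    have e0: "N ((-1) *\<^sub>R (y - real k *\<^sub>R v)) = \<bar>-1\<bar> * N (y - real k *\<^sub>R v)"
      using Nh d by blast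
    have "(-1) *\<^sub>R (y - real k *\<^sub>R v) = real k *\<^sub>R v - y" by simp
    with e0 have e: "N (real k *\<^sub>R v - y) = N (y - real k *\<^sub>R v)" by simp
    have "N (real k *\<^sub>R v) = real k * N v" using Nh v1 by simp
    then have "real k * N v \<le> N (real k *\<^sub>R v - y) + N y" using t by simp
    also have "\<dots> \<le> b + N y" using e yb by auto
    finally show ?thesis by simp
  qed
  obtain k :: nat where "(b + N y) / N v < real k" using reals_Archimedean2 by blast
  then have "b + N y < real k * N v" using Nv by (simp add: divide_less_eq)
  with bound[of k] show False by simp
qed

lemma dl_hausdorff:
  assumes L: "tvs_on L" and Tb: "\<forall>n. banach_on (T n)" and cr: "compactly_regular T L"
  shows "Hausdorff_space L"
proof -
  have sub: "subspace (topspace L)" using L by (simp add: tvs_on_def)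
  have sep: "\<exists>U. openin L U \<and> 0 \<in> U \<and> v \<notin> U" if v: "v \<in> topspace L" "v \<noteq> 0" for v
  proof (rule ccontr)
    assume "\<nexists>U. openin L U \<and> 0 \<in> U \<and> v \<notin> U"
    then have all: "\<And>U. openin L U \<Longrightarrow> 0 \<in> U \<Longrightarrow> v \<in> U" by blast
    let ?S = "range (\<lambda>k::nat. real k *\<^sub>R v)"
    have "compactin L ?S"
      unfolding compactin_def
    proof (intro conjI allI impI)
      show "?S \<subseteq> topspace L" using v sub by (auto simp: subspace_scale)
      fix \<U> assume U: "(\<forall>B\<in>\<U>. openin L B) \<and> ?S \<subseteq> \<Union>\<U>"
      have "real (0::nat) *\<^sub>R v \<in> ?S" by blast
      then have "0 \<in> ?S" by simp
      then obtain B where B: "B \<in> \<U>" "0 \<in> B" using U by blast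
      have "real k *\<^sub>R v \<in> B" for k :: nat
      proof -
        have "continuous_map L L (\<lambda>z. real k *\<^sub>R z)"
          using tvs_scale[OF L, of L "\<lambda>_. real k" id] by simp
        then have "openin L {z \<in> topspace L. real k *\<^sub>R z \<in> B}"
          using B U by (intro openin_continuous_map_preimage) auto
        moreover have "0 \<in> {z \<in> topspace L. real k *\<^sub>R z \<in> B}" using B sub by (auto simp: subspace_0)
        ultimately have "v \<in> {z \<in> topspace L. real k *\<^sub>R z \<in> B}" by (rule all)
        then show ?thesis by simp
      qed
      then have "?S \<subseteq> \<Union>{B}" by auto
      then show "\<exists>\<F>. finite \<F> \<and> \<F> \<subseteq> \<U> \<and> ?S \<subseteq> \<Union>\<F>" using B by (intro exI[of _ "{B}"]) auto
    qed
    then obtain n where "?S \<subseteq> topspace (T n)" "compactin (T n) ?S"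
      using cr unfolding compactly_regular_def by blast
    then show False using banach_unbounded[OF Tb[rule_format, of n] v(2)] by blast
  qed
  show ?thesis
    unfolding Hausdorff_space_def
  proof (intro allI impI)
    fix x y assume xy: "x \<in> topspace L \<and> y \<in> topspace L \<and> x \<noteq> y"
    let ?v = "x - y"
    have vL: "?v \<in> topspace L" using xy sub by (simp add: subspace_diff)
    obtain U where U: "openin L U" "0 \<in> U" "?v \<notin> U" using sep[OF vL] xy by auto
    let ?psi = "\<lambda>p. ?v + ((-1) *\<^sub>R fst p + snd p)"
    have cpsi: "continuous_map (prod_topology L L) L ?psi"
    proof -
      have c1: "continuous_map (prod_topology L L) L (\<lambda>p. (-1) *\<^sub>R fst p)"
        by (rule tvs_scale[OF L _ continuous_map_fst]) simp
      have c2: "continuous_map (prod_topology L L) L (\<lambda>p. (-1) *\<^sub>R fst p + snd p)"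
        by (rule tvs_add[OF L c1 continuous_map_snd])
      show ?thesis by (rule tvs_add[OF L _ c2]) (use vL in simp)
    qed
    define G where "G = {p \<in> topspace (prod_topology L L). ?psi p \<in> U}"
    have oG: "openin (prod_topology L L) G"
      unfolding G_def using cpsi U by (intro openin_continuous_map_preimage)
    have xyG: "(x, y) \<in> G" unfolding G_def using xy U by simp
    have "\<exists>A B. openin L A \<and> openin L B \<and> x \<in> A \<and> y \<in> B \<and> A \<times> B \<subseteq> G"
      using oG[unfolded openin_prod_topology_alt, rule_format, OF xyG] .
    then obtain A B where AB: "openin L A" "openin L B" "x \<in> A" "y \<in> B" "A \<times> B \<subseteq> G"
      by blast
    have "disjnt A B"
      unfolding disjnt_iff
    proof (intro allI notI)
      fix z assume "z \<in> A \<and> z \<in> B"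
      then have "(z, z) \<in> A \<times> B" by simp
      then have "(z, z) \<in> G" using AB(5) by blast
      then have "?psi (z, z) \<in> U" unfolding G_def by blast
      then show False using U by simp
    qed
    then show "\<exists>U V. openin L U \<and> openin L V \<and> x \<in> U \<and> y \<in> V \<and> disjnt U V" using AB by blast
  qed
qed



lemma cfst: "continuous_map Z (prod_topology X Y) f \<Longrightarrow> continuous_map Z X (\<lambda>z. fst (f z))"
proof -
  assume a: "continuous_map Z (prod_topology X Y) f"
  have "continuous_map Z X (fst \<circ> f)" by (rule continuous_map_compose[OF a continuous_map_fst])
  then show ?thesis by (simp add: o_def)
qed

lemma csnd: "continuous_map Z (prod_topology X Y) f \<Longrightarrow> continuous_map Z Y (\<lambda>z. snd (f z))"
proof -
  assume a: "continuous_map Z (prod_topology X Y) f"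
  have "continuous_map Z Y (snd \<circ> f)" by (rule continuous_map_compose[OF a continuous_map_snd])
  then show ?thesis by (simp add: o_def)
qed

lemma cid: "continuous_map X X (\<lambda>z. z)"
  using continuous_map_id by (simp add: id_def)

lemma part_b:
  fixes TE :: "nat \<Rightarrow> 'c::real_vector topology" and TF :: "nat \<Rightarrow> 'd::real_vector topology"
    and \<tau> :: "'c \<Rightarrow> 'd"
  assumes aE: "ascending_seq TE" and dE: "lc_direct_limit TE LE" and dF: "lc_direct_limit TF LF"
    and emb: "\<forall>n. embedding_map (TE n) (TF n) \<tau> \<and> linear_on (topspace (TE n)) \<tau>"
    and bk: "\<forall>m n x. x \<in> topspace (TE m) \<and> \<tau> x \<in> topspace (TF n) \<longrightarrow> x \<in> topspace (TE n)"
    and cF: "compactly_regular TF LF"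
  shows "compactly_regular TE LE"
proof -
  let ?E = "\<Union>n. topspace (TE n)"
  have lcE: "lc_topology LE" and tpE: "topspace LE = ?E" and
    univE: "\<And>L'. lc_topology L' \<Longrightarrow> topspace L' = ?E \<Longrightarrow> (\<forall>n. continuous_map (TE n) L' id)
            \<Longrightarrow> openin L' U \<Longrightarrow> openin LE U" for U
    using dE unfolding lc_direct_limit_def by blast+
  have lcF: "lc_topology LF" and tpF: "topspace LF = (\<Union>n. topspace (TF n))"
    and ciF: "\<And>n. continuous_map (TF n) LF id"
    using dF unfolding lc_direct_limit_def by blast+
  have ctau: "continuous_map (TE n) (TF n) \<tau>" for n
  proof -
    have "homeomorphic_map (TE n) (subtopology (TF n) (\<tau> ` topspace (TE n))) \<tau>"
      using emb by (simp add: embedding_map_def)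
    then have "continuous_map (TE n) (subtopology (TF n) (\<tau> ` topspace (TE n))) \<tau>"
      by (rule homeomorphic_imp_continuous_map)
    then show ?thesis by (simp add: continuous_map_in_subtopology)
  qed
  have ctauL: "continuous_map (TE n) LF \<tau>" for n
    using continuous_map_compose[OF ctau ciF] by (simp add: o_def)
  have subE: "subspace ?E" using lcE tpE by (simp add: lc_topology_def tvs_on_def)
  have lin: "linear_on ?E \<tau>"
    unfolding linear_on_def
  proof (intro conjI ballI allI)
    fix x y assume "x \<in> ?E" "y \<in> ?E"
    then obtain m k where "x \<in> topspace (TE m)" "y \<in> topspace (TE k)" by blast
    then have "x \<in> topspace (TE (max m k))" "y \<in> topspace (TE (max m k))"
      using asc_mono[OF aE, of m "max m k"] asc_mono[OF aE, of k "max m k"] by auto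
    then show "\<tau> (x + y) = \<tau> x + \<tau> y" using emb by (simp add: linear_on_def)
  next
    fix c x assume "x \<in> ?E"
    then obtain m where "x \<in> topspace (TE m)" by blast
    then show "\<tau> (c *\<^sub>R x) = c *\<^sub>R \<tau> x" using emb by (simp add: linear_on_def)
  qed
  have tauE: "\<tau> ` ?E \<subseteq> topspace LF"
    using ctauL continuous_map_image_subset_topspace by fastforce
  let ?P = "pullback_topology ?E \<tau> LF"
  have lcP: "lc_topology ?P" and tpP: "topspace ?P = ?E"
    using lc_pullback[OF lcF subE lin tauE] by auto
  have ciP: "\<forall>n. continuous_map (TE n) ?P id"
  proof
    fix n
    show "continuous_map (TE n) ?P id"
      by (rule continuous_map_pullback') (use ctauL[of n] in auto)
  qed
  have ctLE: "continuous_map LE LF \<tau>"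
    unfolding continuous_map_alt
  proof (intro conjI allI impI)
    fix V assume "openin LF V"
    then have "openin ?P (\<tau> -` V \<inter> ?E)" by (auto simp: openin_pullback_topology)
    then show "openin LE (\<tau> -` V \<inter> topspace LE)" using univE[OF lcP tpP ciP] tpE by simp
  next
    show "\<tau> \<in> topspace LE \<rightarrow> topspace LF" using tauE tpE by auto
  qed
  show ?thesis
    unfolding compactly_regular_def
  proof (intro allI impI)
    fix C assume cC: "compactin LE C"
    then have "compactin LF (\<tau> ` C)" using image_compactin ctLE by blast
    then obtain n where n: "\<tau> ` C \<subseteq> topspace (TF n)" "compactin (TF n) (\<tau> ` C)"
      using cF unfolding compactly_regular_def by blast
    have CE: "C \<subseteq> ?E" using compactin_subset_topspace[OF cC] tpE by simp
    have Cn: "C \<subseteq> topspace (TE n)"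
    proof
      fix x assume "x \<in> C"
      then obtain m where "x \<in> topspace (TE m)" using CE by blast
      moreover have "\<tau> x \<in> topspace (TF n)" using n \<open>x \<in> C\<close> by blast
      ultimately show "x \<in> topspace (TE n)" using bk by blast
    qed
    have hom: "homeomorphic_map (TE n) (subtopology (TF n) (\<tau> ` topspace (TE n))) \<tau>"
      using emb by (simp add: embedding_map_def)
    have "compactin (subtopology (TF n) (\<tau> ` topspace (TE n))) (\<tau> ` C)"
      using n Cn by (auto simp: compactin_subtopology)
    then have "compactin (TE n) C" using homeomorphic_map_compactness[OF hom Cn] by simp
    then show "\<exists>n. C \<subseteq> topspace (TE n) \<and> compactin (TE n) C" using Cn by blast
  qed
qed



lemma part_a:
  fixes TE :: "nat \<Rightarrow> 'a::real_vector topology" and TF :: "nat \<Rightarrow> 'b::real_vector topology"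
  assumes aE: "ascending_seq TE" and aF: "ascending_seq TF"
    and bE: "\<forall>n. banach_on (TE n)" and bF: "\<forall>n. banach_on (TF n)"
    and dE: "lc_direct_limit TE LE" and dF: "lc_direct_limit TF LF"
    and cE: "compactly_regular TE LE" and cF: "compactly_regular TF LF"
  shows "lc_direct_limit (\<lambda>n. prod_topology (TE n) (TF n)) (prod_topology LE LF)
        \<and> compactly_regular (\<lambda>n. prod_topology (TE n) (TF n)) (prod_topology LE LF)"
proof -
  let ?E = "\<Union>n. topspace (TE n)" and ?F = "\<Union>n. topspace (TF n)"
  have lcE: "lc_topology LE" and tpE: "topspace LE = ?E" and ciE: "\<And>n. continuous_map (TE n) LE id" and
    univE: "\<And>L' U. lc_topology L' \<Longrightarrow> topspace L' = ?E \<Longrightarrow> (\<forall>n. continuous_map (TE n) L' id)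
            \<Longrightarrow> openin L' U \<Longrightarrow> openin LE U"
    using dE unfolding lc_direct_limit_def by blast+
  have lcF: "lc_topology LF" and tpF: "topspace LF = ?F" and ciF: "\<And>n. continuous_map (TF n) LF id" and
    univF: "\<And>L' U. lc_topology L' \<Longrightarrow> topspace L' = ?F \<Longrightarrow> (\<forall>n. continuous_map (TF n) L' id)
            \<Longrightarrow> openin L' U \<Longrightarrow> openin LF U"
    using dF unfolding lc_direct_limit_def by blast+
  have tE: "tvs_on LE" and tF: "tvs_on LF" using lcE lcF by (auto simp: lc_topology_def)
  have subE: "subspace (topspace LE)" and subF: "subspace (topspace LF)"
    using tE tF by (auto simp: tvs_on_def)
  let ?P = "prod_topology LE LF"
  have tpP: "topspace ?P = topspace LE \<times> topspace LF" by simp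
  have subP: "subspace (topspace ?P)"
    using subE subF unfolding subspace_def by (auto simp: zero_prod_def)
  have addP: "continuous_map (prod_topology ?P ?P) ?P (\<lambda>(x, y). x + y)"
  proof -
    have "continuous_map (prod_topology ?P ?P) ?P
            (\<lambda>z. (fst (fst z) + fst (snd z), snd (fst z) + snd (snd z)))"
      by (intro continuous_map_pairedI tvs_add[OF tE] tvs_add[OF tF] cfst[OF continuous_map_fst]
          cfst[OF continuous_map_snd] csnd[OF continuous_map_fst] csnd[OF continuous_map_snd])
    then show ?thesis by (rule continuous_map_eq) auto
  qed
  have scP: "continuous_map (prod_topology euclideanreal ?P) ?P (\<lambda>(c, x). c *\<^sub>R x)"
  proof -
    have "continuous_map (prod_topology euclideanreal ?P) ?P
            (\<lambda>z. (fst z *\<^sub>R fst (snd z), fst z *\<^sub>R snd (snd z)))"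
      by (intro continuous_map_pairedI tvs_scale[OF tE] tvs_scale[OF tF] continuous_map_fst
          cfst[OF continuous_map_snd] csnd[OF continuous_map_snd])
    then show ?thesis by (rule continuous_map_eq) auto
  qed
  have lcxP: "\<exists>V. openin ?P V \<and> convex V \<and> p \<in> V \<and> V \<subseteq> U" if pU: "openin ?P U" "p \<in> U" for U p
  proof -
    obtain x y where p: "p = (x, y)" by fastforce
    have "\<exists>U1 V1. openin LE U1 \<and> openin LF V1 \<and> x \<in> U1 \<and> y \<in> V1 \<and> U1 \<times> V1 \<subseteq> U"
      using pU(1)[unfolded openin_prod_topology_alt, rule_format, of x y] pU(2) p by blast
    then obtain U1 V1 where UV: "openin LE U1" "openin LF V1" "x \<in> U1" "y \<in> V1" "U1 \<times> V1 \<subseteq> U"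
      by blast
    obtain W1 where W1: "openin LE W1" "convex W1" "x \<in> W1" "W1 \<subseteq> U1"
      using lcE UV unfolding lc_topology_def by blast
    obtain W2 where W2: "openin LF W2" "convex W2" "y \<in> W2" "W2 \<subseteq> V1"
      using lcF UV unfolding lc_topology_def by blast
    have "openin ?P (W1 \<times> W2)" using W1 W2 by (simp add: openin_prod_Times_iff)
    moreover have "convex (W1 \<times> W2)" using W1 W2 by (simp add: convex_Times)
    moreover have "p \<in> W1 \<times> W2" "W1 \<times> W2 \<subseteq> U" using p W1 W2 UV by auto
    ultimately show ?thesis by blast
  qed
  have lcP: "lc_topology ?P"
    unfolding lc_topology_def tvs_on_def using subP addP scP lcxP by blast
  have unionP: "topspace ?P = (\<Union>n. topspace (prod_topology (TE n) (TF n)))"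
  proof
    show "topspace ?P \<subseteq> (\<Union>n. topspace (prod_topology (TE n) (TF n)))"
    proof
      fix p assume "p \<in> topspace ?P"
      then obtain x y m k where p: "p = (x, y)" "x \<in> topspace (TE m)" "y \<in> topspace (TF k)"
        using tpE tpF by (cases p) auto
      then have "x \<in> topspace (TE (max m k))" "y \<in> topspace (TF (max m k))"
        using asc_mono[OF aE, of m "max m k"] asc_mono[OF aF, of k "max m k"] by auto
      then show "p \<in> (\<Union>n. topspace (prod_topology (TE n) (TF n)))" using p by auto
    qed
    show "(\<Union>n. topspace (prod_topology (TE n) (TF n))) \<subseteq> topspace ?P"
      using tpE tpF by auto
  qed
  have ciP: "\<forall>n. continuous_map (prod_topology (TE n) (TF n)) ?P id"
  proof
    fix n
    have "continuous_map (prod_topology (TE n) (TF n)) ?P (\<lambda>z. (id (fst z), id (snd z)))"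
      using continuous_map_compose[OF continuous_map_fst ciE] continuous_map_compose[OF continuous_map_snd ciF]
      by (intro continuous_map_pairedI) (auto simp: o_def)
    then show "continuous_map (prod_topology (TE n) (TF n)) ?P id"
      by (rule continuous_map_eq) auto
  qed
  have univP: "openin ?P U"
    if L': "lc_topology L'" "topspace L' = (\<Union>n. topspace (prod_topology (TE n) (TF n)))"
       "\<forall>n. continuous_map (prod_topology (TE n) (TF n)) L' id" and U: "openin L' U" for L' U
  proof -
    have tL: "tvs_on L'" using L' by (simp add: lc_topology_def)
    have tpL: "topspace L' = topspace LE \<times> topspace LF" using L'(2) unionP by simp
    have subL: "subspace (topspace L')" using tL by (simp add: tvs_on_def)
    show ?thesis
      unfolding openin_prod_topology_alt
    proof (intro allI impI)
      fix x y assume xyU: "(x, y) \<in> U"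
      then have xy: "x \<in> topspace LE" "y \<in> topspace LF"
        using openin_subset[OF U] tpL by auto
      let ?s = "\<lambda>z::('a \<times> 'b) \<times> ('a \<times> 'b). fst z + snd z + (x, y)"
      have cs: "continuous_map (prod_topology L' L') L' ?s"
        using tpL xy
        by (intro tvs_add[OF tL] continuous_map_fst continuous_map_snd) auto
      define G where "G = {z \<in> topspace (prod_topology L' L'). ?s z \<in> U}"
      have oG: "openin (prod_topology L' L') G" unfolding G_def using cs U
        by (intro openin_continuous_map_preimage)
      have zL: "(0, 0) \<in> topspace L'" using tpL subE subF by (simp add: subspace_0)
      have zG: "((0, 0), (0, 0)) \<in> G" unfolding G_def using zL xyU by simp
      have "\<exists>W1 W2. openin L' W1 \<and> openin L' W2 \<and> (0, 0) \<in> W1 \<and> (0, 0) \<in> W2 \<and> W1 \<times> W2 \<subseteq> G"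
        using oG[unfolded openin_prod_topology_alt, rule_format, OF zG] .
      then obtain W1 W2 where W: "openin L' W1" "openin L' W2" "(0, 0) \<in> W1" "(0, 0) \<in> W2" "W1 \<times> W2 \<subseteq> G"
        by blast
      have linE: "linear_on ?E (\<lambda>e. (e, 0 :: 'b))" by (simp add: linear_on_def)
      have gE: "(\<lambda>e. (e, 0 :: 'b)) ` ?E \<subseteq> topspace L'" using tpL tpE subF by (auto simp: subspace_0)
      have subE': "subspace ?E" using subE tpE by simp
      let ?PE = "pullback_topology ?E (\<lambda>e. (e, 0 :: 'b)) L'"
      have PE: "lc_topology ?PE" "topspace ?PE = ?E" using lc_pullback[OF L'(1) subE' linE gE] by auto
      have ciPE: "\<forall>n. continuous_map (TE n) ?PE id"
      proof
        fix n
        have z: "0 \<in> topspace (TF n)" using bF by (simp add: banach_on_def subspace_0)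
        have "continuous_map (TE n) (prod_topology (TE n) (TF n)) (\<lambda>e. (e, 0))"
          using z by (intro continuous_map_pairedI cid) auto
        then have "continuous_map (TE n) L' (id \<circ> (\<lambda>e. (e, 0 :: 'b)))"
          using L'(3) by (intro continuous_map_compose) auto
        then show "continuous_map (TE n) ?PE id"
          by (intro continuous_map_pullback') auto
      qed
      have oA: "openin LE ((\<lambda>e. (e, 0 :: 'b)) -` W1 \<inter> ?E)"
        using univE[OF PE(1) PE(2) ciPE] W(1) by (auto simp: openin_pullback_topology)
      have linF: "linear_on ?F (\<lambda>f. (0 :: 'a, f))" by (simp add: linear_on_def)
      have gF: "(\<lambda>f. (0 :: 'a, f)) ` ?F \<subseteq> topspace L'" using tpL tpF subE by (auto simp: subspace_0)
      have subF': "subspace ?F" using subF tpF by simp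
      let ?PF = "pullback_topology ?F (\<lambda>f. (0 :: 'a, f)) L'"
      have PF: "lc_topology ?PF" "topspace ?PF = ?F" using lc_pullback[OF L'(1) subF' linF gF] by auto
      have ciPF: "\<forall>n. continuous_map (TF n) ?PF id"
      proof
        fix n
        have z: "0 \<in> topspace (TE n)" using bE by (simp add: banach_on_def subspace_0)
        have "continuous_map (TF n) (prod_topology (TE n) (TF n)) (\<lambda>f. (0, f))"
          using z by (intro continuous_map_pairedI cid) auto
        then have "continuous_map (TF n) L' (id \<circ> (\<lambda>f. (0 :: 'a, f)))"
          using L'(3) by (intro continuous_map_compose) auto
        then show "continuous_map (TF n) ?PF id"
          by (intro continuous_map_pullback') auto
      qed
      have oB: "openin LF ((\<lambda>f. (0 :: 'a, f)) -` W2 \<inter> ?F)"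
        using univF[OF PF(1) PF(2) ciPF] W(2) by (auto simp: openin_pullback_topology)
      have ctE: "continuous_map LE LE (\<lambda>e. e + (- x))"
        using xy subE by (intro tvs_add[OF tE] cid) (auto simp: subspace_neg)
      have ctF: "continuous_map LF LF (\<lambda>f. f + (- y))"
        using xy subF by (intro tvs_add[OF tF] cid) (auto simp: subspace_neg)
      define A where "A = {e \<in> topspace LE. e + (- x) \<in> (\<lambda>e. (e, 0 :: 'b)) -` W1 \<inter> ?E}"
      define B where "B = {f \<in> topspace LF. f + (- y) \<in> (\<lambda>f. (0 :: 'a, f)) -` W2 \<inter> ?F}"
      have oA': "openin LE A" unfolding A_def using ctE oA by (rule openin_continuous_map_preimage)
      have oB': "openin LF B" unfolding B_def using ctF oB by (rule openin_continuous_map_preimage)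
      have z0E: "(0::'a) \<in> ?E" using subspace_0[OF subE] tpE by simp
      have z0F: "(0::'b) \<in> ?F" using subspace_0[OF subF] tpF by simp
      have xA: "x \<in> A" unfolding A_def using xy W(3) z0E by auto
      have yB: "y \<in> B" unfolding B_def using xy W(4) z0F by auto
      have ABU: "A \<times> B \<subseteq> U"
      proof (clarify)
        fix e f assume ef: "e \<in> A" "f \<in> B"
        then have "((e + - x, 0), (0, f + - y)) \<in> W1 \<times> W2" unfolding A_def B_def by auto
        then have "((e + - x, 0), (0, f + - y)) \<in> G" using W(5) by blast
        then have "(e + - x, 0) + (0, f + - y) + (x, y) \<in> U" unfolding G_def by simp
        then show "(e, f) \<in> U" by simp
      qed
      show "\<exists>U1 V1. openin LE U1 \<and> openin LF V1 \<and> x \<in> U1 \<and> y \<in> V1 \<and> U1 \<times> V1 \<subseteq> U"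
        using oA' oB' xA yB ABU by blast
    qed
  qed
  have dl: "lc_direct_limit (\<lambda>n. prod_topology (TE n) (TF n)) ?P"
    unfolding lc_direct_limit_def
  proof (intro conjI lcP unionP ciP allI impI)
    fix L' U assume a: "lc_topology L' \<and> topspace L' = (\<Union>n. topspace (prod_topology (TE n) (TF n)))
      \<and> (\<forall>n. continuous_map (prod_topology (TE n) (TF n)) L' id)" and b: "openin L' U"
    show "openin ?P U" using a b univP by blast
  qed
  have HE: "Hausdorff_space LE" using dl_hausdorff[OF tE bE cE] .
  have HF: "Hausdorff_space LF" using dl_hausdorff[OF tF bF cF] .
  have HP: "Hausdorff_space ?P" using HE HF by (simp add: Hausdorff_space_prod_topology)
  have cr: "compactly_regular (\<lambda>n. prod_topology (TE n) (TF n)) ?P"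
    unfolding compactly_regular_def
  proof (intro allI impI)
    fix C assume cC: "compactin ?P C"
    have "compactin LE (fst ` C)" using image_compactin[OF cC continuous_map_fst] .
    then obtain m where m: "fst ` C \<subseteq> topspace (TE m)" "compactin (TE m) (fst ` C)"
      using cE unfolding compactly_regular_def by blast
    have "compactin LF (snd ` C)" using image_compactin[OF cC continuous_map_snd] .
    then obtain k where k: "snd ` C \<subseteq> topspace (TF k)" "compactin (TF k) (snd ` C)"
      using cF unfolding compactly_regular_def by blast
    let ?n = "max m k"
    have mE: "continuous_map (TE m) (TE ?n) id" using asc_mono[OF aE, of m ?n] by auto
    have kF: "continuous_map (TF k) (TF ?n) id" using asc_mono[OF aF, of k ?n] by auto
    have c1: "compactin (TE ?n) (fst ` C)" using image_compactin[OF m(2) mE] by simp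
    have c2: "compactin (TF ?n) (snd ` C)" using image_compactin[OF k(2) kF] by simp
    have cK: "compactin (prod_topology (TE ?n) (TF ?n)) (fst ` C \<times> snd ` C)"
      using c1 c2 by (simp add: compactin_Times)
    have CK: "C \<subseteq> fst ` C \<times> snd ` C" by force
    have clP: "closedin ?P C" using compactin_imp_closedin[OF HP cC] .
    have "closedin (prod_topology (TE ?n) (TF ?n)) {z \<in> topspace (prod_topology (TE ?n) (TF ?n)). id z \<in> C}"
      using ciP[rule_format, of ?n] clP by (rule closedin_continuous_map_preimage)
    moreover have "{z \<in> topspace (prod_topology (TE ?n) (TF ?n)). id z \<in> C} = C"
      using CK compactin_subset_topspace[OF cK] by auto
    ultimately have "closedin (prod_topology (TE ?n) (TF ?n)) C" by simp
    then have "compactin (prod_topology (TE ?n) (TF ?n)) C" using closed_compactin[OF cK CK] by simp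
    then show "\<exists>n. C \<subseteq> topspace (prod_topology (TE n) (TF n)) \<and> compactin (prod_topology (TE n) (TF n)) C"
      using compactin_subset_topspace by blast
  qed
  show ?thesis using dl cr by (rule conjI)
qed

theorem lemma4p7:
  shows
  "(\<forall>(TE :: nat \<Rightarrow> 'a::real_vector topology) (TF :: nat \<Rightarrow> 'b::real_vector topology) LE LF.
      ascending_seq TE \<and> ascending_seq TF
      \<and> (\<forall>n. banach_on (TE n)) \<and> (\<forall>n. banach_on (TF n))
      \<and> lc_direct_limit TE LE \<and> lc_direct_limit TF LF
      \<and> compactly_regular TE LE \<and> compactly_regular TF LF
      \<longrightarrow> lc_direct_limit (\<lambda>n. prod_topology (TE n) (TF n)) (prod_topology LE LF)
        \<and> compactly_regular (\<lambda>n. prod_topology (TE n) (TF n)) (prod_topology LE LF))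
   \<and>
   (\<forall>(TE :: nat \<Rightarrow> 'c::real_vector topology) (TF :: nat \<Rightarrow> 'd::real_vector topology) LE LF
      (\<tau> :: 'c \<Rightarrow> 'd).
      ascending_seq TE \<and> ascending_seq TF
      \<and> (\<forall>n. lc_space (TE n)) \<and> (\<forall>n. lc_space (TF n))
      \<and> lc_direct_limit TE LE \<and> lc_direct_limit TF LF
      \<and> (\<forall>n. embedding_map (TE n) (TF n) \<tau> \<and> linear_on (topspace (TE n)) \<tau>)
      \<and> (\<forall>m n x. x \<in> topspace (TE m) \<and> \<tau> x \<in> topspace (TF n) \<longrightarrow> x \<in> topspace (TE n))
      \<and> compactly_regular TF LF
      \<longrightarrow> compactly_regular TE LE)"
  proof (intro conjI allI impI)
  fix TE :: "nat \<Rightarrow> 'a::real_vector topology" and TF :: "nat \<Rightarrow> 'b::real_vector topology" and LE LF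
  assume h: "ascending_seq TE \<and> ascending_seq TF
      \<and> (\<forall>n. banach_on (TE n)) \<and> (\<forall>n. banach_on (TF n))
      \<and> lc_direct_limit TE LE \<and> lc_direct_limit TF LF
      \<and> compactly_regular TE LE \<and> compactly_regular TF LF"
  show "lc_direct_limit (\<lambda>n. prod_topology (TE n) (TF n)) (prod_topology LE LF)"
    using part_a[of TE TF LE LF] h by blast
  show "compactly_regular (\<lambda>n. prod_topology (TE n) (TF n)) (prod_topology LE LF)"
    using part_a[of TE TF LE LF] h by blast
next
  fix TE :: "nat \<Rightarrow> 'c::real_vector topology" and TF :: "nat \<Rightarrow> 'd::real_vector topology" and LE LF
    and \<tau> :: "'c \<Rightarrow> 'd"
  assume h: "ascending_seq TE \<and> ascending_seq TF
      \<and> (\<forall>n. lc_space (TE n)) \<and> (\<forall>n. lc_space (TF n))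
      \<and> lc_direct_limit TE LE \<and> lc_direct_limit TF LF
      \<and> (\<forall>n. embedding_map (TE n) (TF n) \<tau> \<and> linear_on (topspace (TE n)) \<tau>)
      \<and> (\<forall>m n x. x \<in> topspace (TE m) \<and> \<tau> x \<in> topspace (TF n) \<longrightarrow> x \<in> topspace (TE n))
      \<and> compactly_regular TF LF"
  show "compactly_regular TE LE"
    using h by (intro part_b[of TE LE TF LF \<tau>]) blast+
qed

end
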